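(* Let $q\in(0,1)$ and let $\alpha,p,j\ge0$ be integers. Then $$\sum_{M\in M^{(\alpha)}_{p,j}(p)}q^{\mathrm{cr}(M)}=[p]_q!\sum_{i=0}^{p}q^{(p-i)(\alpha-i)+pj}\begin{bmatrix} p\\ i\end{bmatrix}_q\begin{bmatrix} \alpha+j\\ i\end{bmatrix}_q\begin{bmatrix} p-i+j\\ j\end{bmatrix}_q.$$
   Context: $[n]_q=\frac{1-q^n}{1-q}$, $[n]_q!=\prod_{m=1}^n[m]_q$, $\begin{bmatrix} n\\ m\end{bmatrix}_q=\frac{[n]_q!}{[m]_q![n-m]_q!}$ ($=0$ if $m>n$). Bipartite matchings: for integers $n,j,\alpha\ge0$, let $T_-=\{-\alpha-j,\dots,-1\}$, $T_+=\{1,\dots,n\}$ (top row), $B_-=\{-\tilde j,\dots,-\tilde 1\}$, $B_+=\{\tilde1,\dots,\tilde n\}$ (bottom row; $\tilde m$ is a formal copy of the integer $m$, bottom vertices compared via these integers). A bipartite matching is a set partition of $T_-\cup T_+\cup B_-\cup B_+$ into singletons (isolated vertices) and blocks $\{a,\tilde b\}$ with $a$ top, $\tilde b$ bottom (edges, written $(a,\tilde b)$). $M^{(\alpha)}_{n,j}$ is the set of such matchings with no edge between $T_-$ and $B_-$; $M^{(\alpha)}_{n,j}(l)$ its subset with exactly $l$ edges. The crossing number $\mathrm{cr}(M)$ is the total number of: (C1) unordered pairs of edges $(a,\tilde b),(c,\tilde d)$ with $a<c$ and $d<b$; (C2) pairs of an edge $(a,\tilde b)$ and an isolated top vertex $c$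 with $c<a$; (C3) pairs of an edge $(a,\tilde b)$ and an isolated bottom vertex $\tilde d$ with $d<b$. *)

theory Defs
  imports Complex_Main
begin

definition qint :: "real \<Rightarrow> nat \<Rightarrow> real" where
  "qint q n = (1 - q ^ n) / (1 - q)"

definition qfact :: "real \<Rightarrow> nat \<Rightarrow> real" where
  "qfact q n = (\<Prod>m = 1..n. qint q m)"

definition qbinom :: "real \<Rightarrow> nat \<Rightarrow> nat \<Rightarrow> real" where
  "qbinom q n m = (if m > n then 0 else qfact q n / (qfact q m * qfact q (n - m)))"

(* Vertices are encoded by integers: top row T_- \<union> T_+, bottom row B_- \<union> B_+
   (the bottom copy ~m is represented by the integer m in the second component). *)
definition top_vs :: "nat \<Rightarrow> nat \<Rightarrow> nat \<Rightarrow> int set" where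
  "top_vs \<alpha> n j = {-(int \<alpha> + int j)..-1} \<union> {1..int n}"

definition bot_vs :: "nat \<Rightarrow> nat \<Rightarrow> int set" where
  "bot_vs n j = {-(int j)..-1} \<union> {1..int n}"

(* A bipartite matching is given by its set of edges (a, b) (a top, ~b bottom);
   all other vertices are isolated. No edge between T_- and B_-. *)
definition matchings :: "nat \<Rightarrow> nat \<Rightarrow> nat \<Rightarrow> (int \<times> int) set set" where
  "matchings \<alpha> n j = {E. E \<subseteq> top_vs \<alpha> n j \<times> bot_vs n j
      \<and> (\<forall>(a,b)\<in>E. \<not> (a < 0 \<and> b < 0))
      \<and> (\<forall>e1\<in>E. \<forall>e2\<in>E. fst e1 = fst e2 \<longrightarrow> e1 = e2)
      \<and> (\<forall>e1\<in>E. \<forall>e2\<in>E. snd e1 = snd e2 \<longrightarrow> e1 = e2)}"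

definition matchings_l :: "nat \<Rightarrow> nat \<Rightarrow> nat \<Rightarrow> nat \<Rightarrow> (int \<times> int) set set" where
  "matchings_l \<alpha> n j l = {E \<in> matchings \<alpha> n j. card E = l}"

(* crossing number: (C1) pairs of crossing edges (each unordered pair counted once
   via the ordering a < c), (C2) edge / isolated top vertex to its left,
   (C3) edge / isolated bottom vertex to its left *)
definition cr :: "nat \<Rightarrow> nat \<Rightarrow> nat \<Rightarrow> (int \<times> int) set \<Rightarrow> nat" where
  "cr \<alpha> n j E =
     card {(e1, e2). e1 \<in> E \<and> e2 \<in> E \<and> fst e1 < fst e2 \<and> snd e2 < snd e1}
   + card {(e, c). e \<in> E \<and> c \<in> top_vs \<alpha> n j - fst ` E \<and> c < fst e}
   + card {(e, d). e \<in> E \<and> d \<in> bot_vs n j - snd ` E \<and> d < snd e}"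

end

theory Submission
  imports Defs
begin


definition Mset :: "int set \<Rightarrow> int set \<Rightarrow> (int \<times> int) set set" where
  "Mset T B = {E. E \<subseteq> T \<times> B
      \<and> (\<forall>(a,b)\<in>E. \<not> (a < 0 \<and> b < 0))
      \<and> (\<forall>e1\<in>E. \<forall>e2\<in>E. fst e1 = fst e2 \<longrightarrow> e1 = e2)
      \<and> (\<forall>e1\<in>E. \<forall>e2\<in>E. snd e1 = snd e2 \<longrightarrow> e1 = e2)}"

definition Ml :: "int set \<Rightarrow> int set \<Rightarrow> nat \<Rightarrow> (int \<times> int) set set" where
  "Ml T B l = {E \<in> Mset T B. card E = l}"

definition crg :: "int set \<Rightarrow> int set \<Rightarrow> (int \<times> int) set \<Rightarrow> nat" where
  "crg T B E =
     card {(e1, e2). e1 \<in> E \<and> e2 \<in> E \<and> fst e1 < fst e2 \<and> snd e2 < snd e1}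
   + card {(e, c). e \<in> E \<and> c \<in> T - fst ` E \<and> c < fst e}
   + card {(e, d). e \<in> E \<and> d \<in> B - snd ` E \<and> d < snd e}"

definition rk :: "int set \<Rightarrow> int \<Rightarrow> nat" where
  "rk B b = card {d\<in>B. d < b}"

lemma Mset_finite: "finite T \<Longrightarrow> finite B \<Longrightarrow> E \<in> Mset T B \<Longrightarrow> finite E"
  unfolding Mset_def using finite_subset by blast

lemma Ml_finite: "finite T \<Longrightarrow> finite B \<Longrightarrow> finite (Ml T B l)"
proof -
  assume "finite T" "finite B"
  then have "Ml T B l \<subseteq> Pow (T \<times> B)" unfolding Ml_def Mset_def by auto
  then show ?thesis using \<open>finite T\<close> \<open>finite B\<close> finite_subset by blast
qed

lemma crg_isol:
  assumes fT: "finite T" and fB: "finite B" and E: "E \<in> Mset T' B" and xT: "x \<in> T"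
    and T': "T' = T - {x}" and mn: "\<forall>t\<in>T'. x < t"
  shows "crg T B E = crg T' B E + card E"
proof -
  have fE: "finite E" using Mset_finite[OF _ fB E] fT T' by auto
  have sub: "E \<subseteq> T' \<times> B" using E unfolding Mset_def by auto
  have eq: "{(e, c). e \<in> E \<and> c \<in> T - fst ` E \<and> c < fst e}
      = {(e, c). e \<in> E \<and> c \<in> T' - fst ` E \<and> c < fst e} \<union> (\<lambda>e. (e, x)) ` E"
  proof (rule set_eqI, clarify)
    fix e :: "int \<times> int" and c :: int
    show "((e, c) \<in> {(e, c). e \<in> E \<and> c \<in> T - fst ` E \<and> c < fst e}) =
          ((e, c) \<in> {(e, c). e \<in> E \<and> c \<in> T' - fst ` E \<and> c < fst e} \<union> (\<lambda>e. (e, x)) ` E)"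
    proof -
      have "x \<notin> fst ` E" using sub T' by auto
      moreover have "e \<in> E \<Longrightarrow> x < fst e" using sub mn by auto
      ultimately show ?thesis using T' xT by auto
    qed
  qed
  have disj: "{(e, c). e \<in> E \<and> c \<in> T' - fst ` E \<and> c < fst e} \<inter> (\<lambda>e. (e, x)) ` E = {}"
    using T' by auto
  have f1: "finite {(e, c). e \<in> E \<and> c \<in> T' - fst ` E \<and> c < fst e}"
    by (rule finite_subset[of _ "E \<times> T"]) (use fE fT T' in auto)
  have "card {(e, c). e \<in> E \<and> c \<in> T - fst ` E \<and> c < fst e}
      = card {(e, c). e \<in> E \<and> c \<in> T' - fst ` E \<and> c < fst e} + card E"
    unfolding eq by (subst card_Un_disjoint[OF f1 _ disj]) (auto simp: fE card_image inj_on_def)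
  then show ?thesis unfolding crg_def by simp
qed

lemma crg_ins:
  assumes fT: "finite T" and fB: "finite B" and E': "E' \<in> Mset T' (B - {b})" and xT: "x \<in> T"
    and T': "T' = T - {x}" and mn: "\<forall>t\<in>T'. x < t" and bB: "b \<in> B"
  shows "crg T B (insert (x, b) E') = crg T' (B - {b}) E' + rk B b"
proof -
  define E where "E = insert (x, b) E'"
  have fE': "finite E'" using Mset_finite[OF _ _ E'] fT fB T' by auto
  have sub: "E' \<subseteq> T' \<times> (B - {b})" using E' unfolding Mset_def by auto
  have injs: "\<forall>e1\<in>E'. \<forall>e2\<in>E'. snd e1 = snd e2 \<longrightarrow> e1 = e2" using E' unfolding Mset_def by auto
  have nin: "(x, b) \<notin> E'" using sub T' by auto
  have xlt: "\<And>e. e \<in> E' \<Longrightarrow> x < fst e" using sub mn by auto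
  have fstE: "fst ` E = insert x (fst ` E')" "snd ` E = insert b (snd ` E')" unfolding E_def by auto
  have c1: "{(e1, e2). e1 \<in> E \<and> e2 \<in> E \<and> fst e1 < fst e2 \<and> snd e2 < snd e1}
     = {(e1, e2). e1 \<in> E' \<and> e2 \<in> E' \<and> fst e1 < fst e2 \<and> snd e2 < snd e1}
       \<union> (\<lambda>e. ((x, b), e)) ` {e \<in> E'. snd e < b}"
  proof (rule set_eqI)
    fix z :: "(int \<times> int) \<times> (int \<times> int)"
    obtain e1 e2 where z: "z = (e1, e2)" by (cases z)
    show "z \<in> {(e1, e2). e1 \<in> E \<and> e2 \<in> E \<and> fst e1 < fst e2 \<and> snd e2 < snd e1} \<longleftrightarrow>
      z \<in> {(e1, e2). e1 \<in> E' \<and> e2 \<in> E' \<and> fst e1 < fst e2 \<and> snd e2 < snd e1}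
       \<union> (\<lambda>e. ((x, b), e)) ` {e \<in> E'. snd e < b}"
    proof -
      have im: "(e1, e2) \<in> (\<lambda>e. ((x, b), e)) ` {e \<in> E'. snd e < b} \<longleftrightarrow> e1 = (x, b) \<and> e2 \<in> E' \<and> snd e2 < b"
        by auto
      have "e1 \<in> E' \<Longrightarrow> e2 = (x,b) \<Longrightarrow> \<not> fst e1 < fst e2" using xlt[of e1] by auto
      moreover have "e2 \<in> E' \<Longrightarrow> x < fst e2" using xlt by blast
      ultimately show ?thesis unfolding z E_def Un_iff im using nin by auto
    qed
  qed
  have f1: "finite {(e1, e2). e1 \<in> E' \<and> e2 \<in> E' \<and> fst e1 < fst e2 \<and> snd e2 < snd e1}"
    by (rule finite_subset[of _ "E' \<times> E'"]) (use fE' in auto)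
  have card1: "card {(e1, e2). e1 \<in> E \<and> e2 \<in> E \<and> fst e1 < fst e2 \<and> snd e2 < snd e1}
     = card {(e1, e2). e1 \<in> E' \<and> e2 \<in> E' \<and> fst e1 < fst e2 \<and> snd e2 < snd e1}
       + card {e \<in> E'. snd e < b}"
    unfolding c1 by (subst card_Un_disjoint[OF f1]) (use nin fE' in \<open>auto simp: card_image inj_on_def\<close>)
  have c2: "{(e, c). e \<in> E \<and> c \<in> T - fst ` E \<and> c < fst e}
      = {(e, c). e \<in> E' \<and> c \<in> T' - fst ` E' \<and> c < fst e}"
  proof (rule set_eqI)
    fix z :: "(int \<times> int) \<times> int"
    obtain e c where z: "z = (e, c)" by (cases z)
    have "c \<in> T - fst ` E \<longleftrightarrow> c \<in> T' - fst ` E'" using T' fstE by auto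
    moreover have "c \<in> T' \<Longrightarrow> \<not> c < x" using mn by force
    ultimately show "z \<in> {(e, c). e \<in> E \<and> c \<in> T - fst ` E \<and> c < fst e} \<longleftrightarrow>
        z \<in> {(e, c). e \<in> E' \<and> c \<in> T' - fst ` E' \<and> c < fst e}"
      unfolding z E_def by auto
  qed
  have Beq: "B - snd ` E = (B - {b}) - snd ` E'" using fstE by auto
  have c3: "{(e, d). e \<in> E \<and> d \<in> B - snd ` E \<and> d < snd e}
      = {(e, d). e \<in> E' \<and> d \<in> (B - {b}) - snd ` E' \<and> d < snd e}
        \<union> (\<lambda>d. ((x, b), d)) ` {d \<in> (B - {b}) - snd ` E'. d < b}"
    unfolding Beq unfolding E_def by auto
  have f3: "finite {(e, d). e \<in> E' \<and> d \<in> (B - {b}) - snd ` E' \<and> d < snd e}"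
    by (rule finite_subset[of _ "E' \<times> B"]) (use fE' fB in auto)
  have card3: "card {(e, d). e \<in> E \<and> d \<in> B - snd ` E \<and> d < snd e}
      = card {(e, d). e \<in> E' \<and> d \<in> (B - {b}) - snd ` E' \<and> d < snd e}
        + card {d \<in> (B - {b}) - snd ` E'. d < b}"
    unfolding c3 by (subst card_Un_disjoint[OF f3]) (use nin fB in \<open>auto simp: card_image inj_on_def\<close>)
  have "card {e \<in> E'. snd e < b} = card (snd ` {e \<in> E'. snd e < b})"
    by (rule card_image[symmetric]) (use injs in \<open>auto simp: inj_on_def\<close>)
  also have "snd ` {e \<in> E'. snd e < b} = {d \<in> snd ` E'. d < b}" by auto
  finally have r1: "card {e \<in> E'. snd e < b} = card {d \<in> snd ` E'. d < b}" .
  have U: "{d\<in>B. d < b} = {d \<in> snd ` E'. d < b} \<union> {d \<in> (B - {b}) - snd ` E'. d < b}"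
    using sub by auto
  have "finite (snd ` E')" using fE' by auto
  then have "rk B b = card {d \<in> snd ` E'. d < b} + card {d \<in> (B - {b}) - snd ` E'. d < b}"
    unfolding rk_def U by (subst card_Un_disjoint) (use fB in auto)
  then show ?thesis unfolding crg_def E_def[symmetric] card1 card3 c2 using r1 by simp
qed

definition W :: "real \<Rightarrow> int set \<Rightarrow> int set \<Rightarrow> nat \<Rightarrow> real" where
  "W q T B l = (\<Sum>E\<in>Ml T B l. q ^ crg T B E)"

lemma W_rec:
  assumes fT: "finite T" and fB: "finite B" and xT: "x \<in> T" and mn: "\<forall>t\<in>T - {x}. x < t"
  shows "W q T B l = q ^ l * W q (T - {x}) B l
     + (case l of 0 \<Rightarrow> 0 | Suc l' \<Rightarrow>
         (\<Sum>b\<in>{b\<in>B. \<not> (x < 0 \<and> b < 0)}. q ^ rk B b * W q (T - {x}) (B - {b}) l'))"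
proof -
  define T' where "T' = T - {x}"
  have fT': "finite T'" using fT T'_def by auto
  define S1 where "S1 = {E\<in>Ml T B l. x \<notin> fst ` E}"
  define S2 where "S2 = {E\<in>Ml T B l. x \<in> fst ` E}"
  have U: "Ml T B l = S1 \<union> S2" "S1 \<inter> S2 = {}" unfolding S1_def S2_def by auto
  have fin: "finite S1" "finite S2" using Ml_finite[OF fT fB, of l] unfolding S1_def S2_def by auto
  have S1eq: "S1 = Ml T' B l"
  proof -
    have "E \<in> Mset T B \<and> x \<notin> fst ` E \<longleftrightarrow> E \<in> Mset T' B" for E
    proof
      assume "E \<in> Mset T B \<and> x \<notin> fst ` E"
      then show "E \<in> Mset T' B" unfolding Mset_def T'_def by (auto simp: image_iff)
    next
      assume "E \<in> Mset T' B"
      then show "E \<in> Mset T B \<and> x \<notin> fst ` E" unfolding Mset_def T'_def by auto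
    qed
    then show ?thesis unfolding S1_def Ml_def by auto
  qed
  have sum1: "(\<Sum>E\<in>S1. q ^ crg T B E) = q ^ l * W q T' B l"
  proof -
    have "(\<Sum>E\<in>S1. q ^ crg T B E) = (\<Sum>E\<in>Ml T' B l. q ^ l * q ^ crg T' B E)"
    proof (rule sum.cong)
      fix E assume "E \<in> Ml T' B l"
      then have "E \<in> Mset T' B" "card E = l" unfolding Ml_def by auto
      then show "q ^ crg T B E = q ^ l * q ^ crg T' B E"
        using crg_isol[OF fT fB _ xT T'_def] mn unfolding T'_def by (simp add: power_add)
    qed (simp add: S1eq)
    then show ?thesis unfolding W_def by (simp add: sum_distrib_left)
  qed
  have sum2: "(\<Sum>E\<in>S2. q ^ crg T B E) = (case l of 0 \<Rightarrow> 0 | Suc l' \<Rightarrow>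
         (\<Sum>b\<in>{b\<in>B. \<not> (x < 0 \<and> b < 0)}. q ^ rk B b * W q T' (B - {b}) l'))"
  proof (cases l)
    case 0
    have "S2 = {}"
    proof -
      { fix E assume "E \<in> S2"
        then have "E \<in> Mset T B" "card E = 0" "x \<in> fst ` E" unfolding S2_def Ml_def using 0 by auto
        then have Ef: "E \<in> Mset T B" "card E = 0" "x \<in> fst ` E" by auto
        have "finite E" using Mset_finite[OF fT fB Ef(1)] .
        with Ef(2) have "E = {}" by simp
        with Ef(3) have False by simp }
      then show ?thesis by auto
    qed
    then show ?thesis using 0 by simp
  next
    case (Suc l')
    define Bx where "Bx = {b\<in>B. \<not> (x < 0 \<and> b < 0)}"
    define Sg where "Sg = (SIGMA b:Bx. Ml T' (B - {b}) l')"
    define f where "f = (\<lambda>(b::int, E'::(int \<times> int) set). insert (x, b) E')"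
    have nx: "(x, b) \<notin> E'" "\<forall>e\<in>E'. fst e \<noteq> x \<and> snd e \<noteq> b" if "(b, E') \<in> Sg" for b E'
      using that unfolding Sg_def Ml_def Mset_def T'_def by auto
    have S2eq: "S2 = f ` Sg"
    proof
      show "f ` Sg \<subseteq> S2"
      proof clarify
        fix b E' assume bE: "(b, E') \<in> Sg"
        then have b: "b \<in> B" "\<not> (x < 0 \<and> b < 0)" and E': "E' \<in> Mset T' (B - {b})" "card E' = l'"
          unfolding Sg_def Bx_def Ml_def by auto
        have fE': "finite E'" using Mset_finite[OF fT' _ E'(1)] fB by auto
        have "insert (x, b) E' \<in> Mset T B"
          using E'(1) b xT nx[OF bE] unfolding Mset_def T'_def by auto
        moreover have "card (insert (x, b) E') = l" using fE' nx[OF bE] E'(2) Suc by simp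
        ultimately show "f (b, E') \<in> S2" unfolding S2_def Ml_def f_def by auto
      qed
    next
      show "S2 \<subseteq> f ` Sg"
      proof
        fix E assume "E \<in> S2"
        then have E: "E \<in> Mset T B" "card E = l" "x \<in> fst ` E" unfolding S2_def Ml_def by auto
        then obtain b where xb: "(x, b) \<in> E" by force
        have fE: "finite E" using Mset_finite[OF fT fB E(1)] .
        define E' where "E' = E - {(x, b)}"
        have inj1: "\<forall>e1\<in>E. \<forall>e2\<in>E. fst e1 = fst e2 \<longrightarrow> e1 = e2"
          and inj2: "\<forall>e1\<in>E. \<forall>e2\<in>E. snd e1 = snd e2 \<longrightarrow> e1 = e2" using E(1) unfolding Mset_def by auto
        have "E' \<in> Mset T' (B - {b})"
        proof -
          have ne: "fst e \<noteq> x \<and> snd e \<noteq> b" if eE': "e \<in> E'" for e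
          proof -
            have eE: "e \<in> E" and nq: "e \<noteq> (x, b)" using eE' unfolding E'_def by auto
            have "fst e \<noteq> x"
            proof
              assume "fst e = x"
              then have "e = (x, b)" using inj1 eE xb by (metis fst_conv)
              then show False using nq by simp
            qed
            moreover have "snd e \<noteq> b"
            proof
              assume "snd e = b"
              then have "e = (x, b)" using inj2 eE xb by (metis snd_conv)
              then show False using nq by simp
            qed
            ultimately show ?thesis by simp
          qed
          have sE: "E \<subseteq> T \<times> B" using E(1) unfolding Mset_def by auto
          have "E' \<subseteq> T' \<times> (B - {b})"
          proof
            fix e assume "e \<in> E'"
            then have "e \<in> E" "fst e \<noteq> x" "snd e \<noteq> b" using ne unfolding E'_def by auto
            then show "e \<in> T' \<times> (B - {b})" using sE unfolding T'_def by (cases e) auto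
          qed
          moreover have EE: "E' \<subseteq> E" unfolding E'_def by auto
          moreover have "\<forall>(a,b)\<in>E'. \<not> (a < 0 \<and> b < 0)"
          proof -
            have al: "\<forall>(a,b)\<in>E. \<not> (a < 0 \<and> b < 0)" using E(1) unfolding Mset_def by simp
            show ?thesis using al EE by blast
          qed
          moreover have "\<forall>e1\<in>E'. \<forall>e2\<in>E'. fst e1 = fst e2 \<longrightarrow> e1 = e2" using inj1 EE by fast
          moreover have "\<forall>e1\<in>E'. \<forall>e2\<in>E'. snd e1 = snd e2 \<longrightarrow> e1 = e2" using inj2 EE by fast
          ultimately show ?thesis unfolding Mset_def by (simp only: mem_Collect_eq simp_thms)
        qed
        moreover have "card E' = l'" using E(2) Suc fE xb unfolding E'_def by simp
        moreover have "b \<in> Bx" using E(1) xb unfolding Mset_def Bx_def by auto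
        ultimately have "(b, E') \<in> Sg" unfolding Sg_def Ml_def by auto
        moreover have "E = f (b, E')" using xb unfolding f_def E'_def by auto
        ultimately show "E \<in> f ` Sg" by (rule rev_image_eqI)
      qed
    qed
    have injf: "inj_on f Sg"
    proof (rule inj_onI, clarify)
      fix b E' b2 E2' assume a1: "(b, E') \<in> Sg" and a2: "(b2, E2') \<in> Sg" and eq: "f (b, E') = f (b2, E2')"
      have "(x, b) \<in> insert (x, b2) E2'" using eq unfolding f_def by auto
      then have "b = b2" using nx[OF a2] by auto
      have e1: "insert (x, b) E' = insert (x, b2) E2'" using eq unfolding f_def by simp
      have "E' = insert (x, b) E' - {(x, b)}" using nx(1)[OF a1] by simp
      also have "\<dots> = insert (x, b2) E2' - {(x, b2)}" using e1 \<open>b = b2\<close> by simp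
      also have "\<dots> = E2'" using nx(1)[OF a2] by simp
      finally show "b = b2 \<and> E' = E2'" using \<open>b = b2\<close> by simp
    qed
    have finSg: "finite Bx" "\<And>b. finite (Ml T' (B - {b}) l')" using fB fT' Ml_finite unfolding Bx_def by auto
    have "(\<Sum>E\<in>S2. q ^ crg T B E) = (\<Sum>z\<in>Sg. q ^ crg T B (f z))"
      unfolding S2eq by (rule sum.reindex[OF injf, unfolded comp_def])
    also have "\<dots> = (\<Sum>b\<in>Bx. \<Sum>E'\<in>Ml T' (B - {b}) l'. q ^ crg T B (insert (x, b) E'))"
    proof -
      have "(\<Sum>z\<in>Sg. q ^ crg T B (f z)) = (\<Sum>(b, E')\<in>Sg. q ^ crg T B (insert (x, b) E'))"
        unfolding f_def by (rule sum.cong) auto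
      also have "\<dots> = (\<Sum>b\<in>Bx. \<Sum>E'\<in>Ml T' (B - {b}) l'. q ^ crg T B (insert (x, b) E'))"
        unfolding Sg_def by (rule sum.Sigma[symmetric]) (use finSg in auto)
      finally show ?thesis .
    qed
    also have "\<dots> = (\<Sum>b\<in>Bx. \<Sum>E'\<in>Ml T' (B - {b}) l'. q ^ rk B b * q ^ crg T' (B - {b}) E')"
    proof (intro sum.cong refl)
      fix b E' assume "b \<in> Bx" "E' \<in> Ml T' (B - {b}) l'"
      then show "q ^ crg T B (insert (x, b) E') = q ^ rk B b * q ^ crg T' (B - {b}) E'"
        using crg_ins[OF fT fB _ xT T'_def, of E' b] mn unfolding Bx_def Ml_def T'_def
        by (simp add: power_add)
    qed
    also have "\<dots> = (\<Sum>b\<in>Bx. q ^ rk B b * W q T' (B - {b}) l')"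
      unfolding W_def by (simp add: sum_distrib_left)
    finally show ?thesis using Suc unfolding Bx_def by simp
  qed
  show ?thesis
    unfolding W_def U(1) sum.union_disjoint[OF fin U(2)] sum1[unfolded W_def] sum2[unfolded W_def]
    unfolding W_def T'_def ..
qed



lemma qint_0[simp]: "qint q 0 = 0" by (simp add: qint_def)

lemma qint_Suc: "q \<noteq> 1 \<Longrightarrow> qint q (Suc n) = qint q n + q ^ n"
  unfolding qint_def by (simp add: field_simps)

lemma qint_add: "q \<noteq> 1 \<Longrightarrow> qint q (a + b) = qint q a + q ^ a * qint q b"
  unfolding qint_def by (simp add: field_simps power_add)

lemma qint_pos: "0 < q \<Longrightarrow> q < 1 \<Longrightarrow> 0 < n \<Longrightarrow> 0 < qint q n"
  unfolding qint_def by (simp add: power_less_one_iff)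

lemma qfact_0[simp]: "qfact q 0 = 1" by (simp add: qfact_def)

lemma qfact_Suc: "qfact q (Suc n) = qfact q n * qint q (Suc n)"
  unfolding qfact_def by (simp add: prod.nat_ivl_Suc' mult.commute)

lemma qfact_pos: "0 < q \<Longrightarrow> q < 1 \<Longrightarrow> 0 < qfact q n"
  by (induction n) (auto simp: qfact_Suc qint_pos)

lemma qbinom_0[simp]: "0 < q \<Longrightarrow> q < 1 \<Longrightarrow> qbinom q n 0 = 1"
  unfolding qbinom_def using qfact_pos[of q n] by simp

lemma qbinom_n_n[simp]: "0 < q \<Longrightarrow> q < 1 \<Longrightarrow> qbinom q n n = 1"
  unfolding qbinom_def using qfact_pos[of q n] by simp

lemma qbinom_gt[simp]: "n < k \<Longrightarrow> qbinom q n k = 0"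
  unfolding qbinom_def by simp

lemma qbinom_pascal:
  assumes q: "0 < q" "q < 1"
  shows "qbinom q (Suc n) (Suc k) = q ^ (Suc k) * qbinom q n (Suc k) + qbinom q n k"
proof (cases "k < n")
  case True
  then obtain m where n: "n = k + Suc m" by (metis add_Suc_right less_imp_Suc_add add_Suc)
  have pk: "qfact q k > 0" and pm: "qfact q m > 0" and pn: "qfact q n > 0"
    using qfact_pos[OF q] by auto
  have ik: "qint q (Suc k) > 0" and im: "qint q (Suc m) > 0" using qint_pos[OF q] by auto
  have key: "qint q (Suc n) = q ^ Suc k * qint q (Suc m) + qint q (Suc k)"
    using qint_add[of q "Suc k" "Suc m"] q n by simp
  have e1: "qbinom q (Suc n) (Suc k) = qfact q n * qint q (Suc n) / (qfact q k * qint q (Suc k) * (qfact q m * qint q (Suc m)))"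
    unfolding qbinom_def using n by (simp add: qfact_Suc)
  have e2: "qbinom q n (Suc k) = qfact q n / (qfact q k * qint q (Suc k) * qfact q m)"
    unfolding qbinom_def using n by (simp add: qfact_Suc)
  have e3: "qbinom q n k = qfact q n / (qfact q k * (qfact q m * qint q (Suc m)))"
    unfolding qbinom_def using n by (simp add: qfact_Suc)
  show ?thesis unfolding e1 e2 e3 key using pk pm ik im
    by (simp add: field_simps)
next
  case False
  then show ?thesis using q by (cases "k = n") auto
qed

lemma qbinom_absorb:
  assumes q: "0 < q" "q < 1"
  shows "qint q (Suc n) * qbinom q n k = qint q (Suc k) * qbinom q (Suc n) (Suc k)"
proof (cases "k \<le> n")
  case True
  have pk: "qfact q k > 0" and pm: "qfact q (n - k) > 0"
    using qfact_pos[OF q] by auto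
  have ik: "qint q (Suc k) > 0" using qint_pos[OF q] by auto
  have "Suc n - Suc k = n - k" by simp
  then show ?thesis unfolding qbinom_def using True pk pm ik
    by (simp add: qfact_Suc field_simps)
qed simp

lemma qbinom_sym:
  assumes "k \<le> n" shows "qbinom q n (n - k) = qbinom q n k"
proof -
  have "\<not> n < n - k" "n - (n - k) = k" using assms by auto
  then show ?thesis unfolding qbinom_def using assms by (simp add: mult.commute)
qed

definition g :: "real \<Rightarrow> nat \<Rightarrow> nat \<Rightarrow> nat \<Rightarrow> real" where
  "g q P N l = qfact q l * qbinom q P l * qbinom q N l"

definition ff :: "real \<Rightarrow> nat \<Rightarrow> nat \<Rightarrow> real" where
  "ff q K i = (\<Prod>m<i. qint q (K - m))"

definition tm :: "real \<Rightarrow> nat \<Rightarrow> nat \<Rightarrow> nat \<Rightarrow> nat \<Rightarrow> nat \<Rightarrow> nat \<Rightarrow> real" where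
  "tm q A P J K l i = q ^ ((A - i) * (l - i)) * qbinom q A i * q ^ (J * i) * ff q K i
      * g q P (J + K - i) (l - i)"

definition Fc :: "real \<Rightarrow> nat \<Rightarrow> nat \<Rightarrow> nat \<Rightarrow> nat \<Rightarrow> nat \<Rightarrow> real" where
  "Fc q A P J K l = (\<Sum>i = 0..l. tm q A P J K l i)"

lemma ff_0[simp]: "ff q K 0 = 1" by (simp add: ff_def)

lemma ff_Suc: "ff q K (Suc i) = qint q K * ff q (K - 1) i"
proof -
  have X: "(\<Prod>m<i. qint q (K - Suc m)) = (\<Prod>m<i. qint q (K - 1 - m))"
    by (rule prod.cong) simp_all
  have "ff q K (Suc i) = (\<Prod>m<Suc i. qint q (K - m))" by (simp only: ff_def)
  also have "\<dots> = qint q (K - 0) * (\<Prod>m<i. qint q (K - Suc m))"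
    by (rule prod.lessThan_Suc_shift)
  also have "\<dots> = qint q K * ff q (K - 1) i" by (simp only: X diff_zero ff_def)
  finally show ?thesis .
qed

lemma ff_fact: "i \<le> K \<Longrightarrow> ff q K i * qfact q (K - i) = qfact q K"
proof (induction i arbitrary: K)
  case 0 then show ?case by simp
next
  case (Suc i)
  then obtain K' where K: "K = Suc K'" by (cases K) auto
  have "ff q K (Suc i) * qfact q (K - Suc i) = qint q K * (ff q K' i * qfact q (K' - i))"
    unfolding ff_Suc K by simp
  also have "\<dots> = qint q K * qfact q K'" using Suc.IH[of K'] Suc.prems K by simp
  finally show ?case unfolding K qfact_Suc by simp
qed

lemma qbinom_absorb':
  assumes q: "0 < q" "q < 1"
  shows "qint q N * qbinom q (N - 1) l = qint q (Suc l) * qbinom q N (Suc l)"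
proof (cases N)
  case 0 then show ?thesis by simp
next
  case (Suc n) then show ?thesis using qbinom_absorb[OF q, of n l] by simp
qed

lemma g0: "0 < q \<Longrightarrow> q < 1 \<Longrightarrow> g q P N 0 = 1" by (simp add: g_def)

lemma g_P0: "g q 0 N (Suc l) = 0" by (simp add: g_def)

lemma g_rec:
  assumes q: "0 < q" "q < 1"
  shows "g q (Suc P) N (Suc l) = q ^ (Suc l) * g q P N (Suc l) + qint q N * g q P (N - 1) l"
proof -
  have "g q (Suc P) N (Suc l) = qfact q (Suc l) * (q ^ Suc l * qbinom q P (Suc l) + qbinom q P l) * qbinom q N (Suc l)"
    unfolding g_def qbinom_pascal[OF q] ..
  also have "\<dots> = q ^ (Suc l) * g q P N (Suc l) + qfact q l * qbinom q P l * (qint q (Suc l) * qbinom q N (Suc l))"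
    unfolding g_def qfact_Suc by (simp add: algebra_simps)
  also have "\<dots> = q ^ (Suc l) * g q P N (Suc l) + qint q N * g q P (N - 1) l"
    unfolding qbinom_absorb'[OF q, symmetric] g_def by (simp add: algebra_simps)
  finally show ?thesis .
qed

lemma Fc_l0: "0 < q \<Longrightarrow> q < 1 \<Longrightarrow> Fc q A P J K 0 = 1"
  by (simp add: Fc_def tm_def g0)

lemma Fc_A0:
  assumes q: "0 < q" "q < 1"
  shows "Fc q 0 P J K l = g q P (J + K) l"
proof (cases l)
  case 0 then show ?thesis using q by (simp add: Fc_def tm_def g0)
next
  case (Suc l')
  have "Fc q 0 P J K l = tm q 0 P J K l 0 + (\<Sum>i = 0..l'. tm q 0 P J K l (Suc i))"
    unfolding Fc_def Suc by (simp only: sum.atLeast0_atMost_Suc_shift comp_def)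
  also have "(\<Sum>i = 0..l'. tm q 0 P J K l (Suc i)) = 0" by (simp add: tm_def)
  finally show ?thesis using q by (simp add: tm_def)
qed

lemma Fc_rec:
  assumes q: "0 < q" "q < 1"
  shows "Fc q (Suc A) P J K (Suc l) = q ^ (Suc l) * Fc q A P J K (Suc l) + q ^ J * qint q K * Fc q A P J (K - 1) l"
proof -
  have t0: "tm q (Suc A) P J K (Suc l) 0 = q ^ (Suc l) * tm q A P J K (Suc l) 0"
    unfolding tm_def using q by (simp add: power_add[symmetric] algebra_simps)
  have ts: "tm q (Suc A) P J K (Suc l) (Suc i) = q ^ (Suc l) * tm q A P J K (Suc l) (Suc i) + q ^ J * qint q K * tm q A P J (K - 1) l i"
    if i: "i \<le> l" for i
  proof -
    define G where "G = g q P (J + K - Suc i) (l - i)"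
    have a: "q ^ (Suc l) * tm q A P J K (Suc l) (Suc i) = q ^ ((A - i) * (l - i)) * q ^ Suc i * qbinom q A (Suc i) * q ^ (J * Suc i) * ff q K (Suc i) * G"
    proof (cases "Suc i \<le> A")
      case True
      have "Suc l + (A - Suc i) * (Suc l - Suc i) = (A - i) * (l - i) + Suc i"
      proof -
        obtain d where "l = i + d" using i le_Suc_ex by blast
        moreover obtain e where "A = Suc i + e" using True le_Suc_ex by blast
        ultimately show ?thesis by (simp add: algebra_simps)
      qed
      then have pw: "q ^ Suc l * q ^ ((A - Suc i) * (Suc l - Suc i)) = q ^ ((A - i) * (l - i)) * q ^ Suc i"
        by (simp only: power_add[symmetric])
      define R where "R = qbinom q A (Suc i) * q ^ (J * Suc i) * ff q K (Suc i) * G"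
      have tmv: "tm q A P J K (Suc l) (Suc i) = q ^ ((A - Suc i) * (Suc l - Suc i)) * R"
        unfolding tm_def G_def R_def by (simp only: mult.assoc diff_Suc_Suc)
      have "q ^ (Suc l) * tm q A P J K (Suc l) (Suc i) = (q ^ Suc l * q ^ ((A - Suc i) * (Suc l - Suc i))) * R"
        unfolding tmv by (simp only: mult.assoc)
      also have "\<dots> = (q ^ ((A - i) * (l - i)) * q ^ Suc i) * R" unfolding pw ..
      finally show ?thesis unfolding R_def by (simp only: mult.assoc)
    next
      case False then show ?thesis unfolding tm_def by simp
    qed
    have b: "q ^ J * qint q K * tm q A P J (K - 1) l i = q ^ ((A - i) * (l - i)) * qbinom q A i * q ^ (J * Suc i) * ff q K (Suc i) * G"
    proof (cases K)
      case 0 then show ?thesis unfolding ff_Suc by simp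
    next
      case (Suc K')
      have "J + (K - 1) - i = J + K - Suc i" using Suc by simp
      then show ?thesis unfolding tm_def G_def ff_Suc by (simp add: algebra_simps power_add)
    qed
    have "tm q (Suc A) P J K (Suc l) (Suc i) = q ^ ((A - i) * (l - i)) * (q ^ Suc i * qbinom q A (Suc i) + qbinom q A i) * q ^ (J * Suc i) * ff q K (Suc i) * G"
      unfolding tm_def G_def qbinom_pascal[OF q] by simp
    then show ?thesis unfolding a b by (simp add: algebra_simps)
  qed
  have "Fc q (Suc A) P J K (Suc l) = tm q (Suc A) P J K (Suc l) 0 + (\<Sum>i = 0..l. tm q (Suc A) P J K (Suc l) (Suc i))"
    unfolding Fc_def by (simp only: sum.atLeast0_atMost_Suc_shift comp_def)
  also have "\<dots> = q ^ (Suc l) * tm q A P J K (Suc l) 0 + (\<Sum>i = 0..l. q ^ (Suc l) * tm q A P J K (Suc l) (Suc i) + q ^ J * qint q K * tm q A P J (K - 1) l i)"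
    using t0 ts by simp
  also have "\<dots> = q ^ (Suc l) * (tm q A P J K (Suc l) 0 + (\<Sum>i = 0..l. tm q A P J K (Suc l) (Suc i))) + q ^ J * qint q K * (\<Sum>i = 0..l. tm q A P J (K - 1) l i)"
    by (simp add: sum.distrib sum_distrib_left algebra_simps)
  also have "\<dots> = q ^ (Suc l) * Fc q A P J K (Suc l) + q ^ J * qint q K * Fc q A P J (K - 1) l"
    by (simp only: Fc_def sum.atLeast0_atMost_Suc_shift comp_def)
  finally show ?thesis .
qed



lemma rk_sum:
  assumes "finite B" and q1: "q \<noteq> 1"
  shows "(\<Sum>b\<in>B. q ^ rk B b) = qint q (card B)"
  using assms(1)
proof (induction B rule: finite_linorder_max_induct)
  case empty then show ?case by simp
next
  case (insert m B0)
  have mn: "m \<notin> B0" using insert by auto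
  have r1: "rk (insert m B0) m = card B0"
  proof -
    have "{d \<in> insert m B0. d < m} = B0" using insert by auto
    then show ?thesis unfolding rk_def by simp
  qed
  have r2: "rk (insert m B0) b = rk B0 b" if "b \<in> B0" for b
  proof -
    have "{d \<in> insert m B0. d < b} = {d \<in> B0. d < b}" using insert that by force
    then show ?thesis unfolding rk_def by simp
  qed
  have "(\<Sum>b\<in>insert m B0. q ^ rk (insert m B0) b) = q ^ card B0 + (\<Sum>b\<in>B0. q ^ rk (insert m B0) b)"
    using insert mn r1 by (simp add: sum.insert)
  also have "(\<Sum>b\<in>B0. q ^ rk (insert m B0) b) = (\<Sum>b\<in>B0. q ^ rk B0 b)"
    using r2 by (intro sum.cong) auto
  finally show ?case using insert mn q1 by (simp add: qint_Suc)
qed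

lemma rk_sum_pos:
  assumes fB: "finite B" and q1: "q \<noteq> 1"
  shows "(\<Sum>b\<in>{b\<in>B. 0 \<le> b}. q ^ rk B b) = q ^ card {d\<in>B. d < 0} * qint q (card {b\<in>B. 0 \<le> b})"
proof -
  define Bp where "Bp = {b\<in>B. 0 \<le> b}"
  define J where "J = card {d\<in>B. d < 0}"
  have fBp: "finite Bp" using fB unfolding Bp_def by auto
  have r: "rk B b = J + rk Bp b" if "b \<in> Bp" for b
  proof -
    have U: "{d\<in>B. d < b} = {d\<in>B. d < 0} \<union> {d \<in> Bp. d < b}" using that unfolding Bp_def by auto
    have "card ({d\<in>B. d < 0} \<union> {d \<in> Bp. d < b}) = card {d\<in>B. d < 0} + card {d \<in> Bp. d < b}"
      by (rule card_Un_disjoint) (use fB fBp in \<open>auto simp: Bp_def\<close>)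
    then show ?thesis unfolding rk_def J_def U .
  qed
  have "(\<Sum>b\<in>Bp. q ^ rk B b) = (\<Sum>b\<in>Bp. q ^ J * q ^ rk Bp b)"
    by (rule sum.cong) (simp_all add: r power_add)
  also have "\<dots> = q ^ J * (\<Sum>b\<in>Bp. q ^ rk Bp b)" by (rule sum_distrib_left[symmetric])
  also have "\<dots> = q ^ J * qint q (card Bp)" using rk_sum[OF fBp q1] by simp
  finally show ?thesis unfolding Bp_def J_def .
qed

lemma Ml_empty: "Ml {} B l = (if l = 0 then {{}} else {})"
  unfolding Ml_def Mset_def by auto

lemma crg_empty: "crg T B {} = 0" unfolding crg_def by simp

lemma min_facts:
  assumes "finite T" "T \<noteq> {}"
  shows "Min T \<in> T" "\<forall>t\<in>T - {Min T}. Min T < t"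
proof -
  show "Min T \<in> T" using assms by simp
  show "\<forall>t\<in>T - {Min T}. Min T < t"
  proof
    fix t assume "t \<in> T - {Min T}"
    then have "Min T \<le> t" "t \<noteq> Min T" using assms by auto
    then show "Min T < t" by simp
  qed
qed

lemma W_nonneg:
  assumes q: "0 < q" "q < 1"
  shows "finite T \<Longrightarrow> finite B \<Longrightarrow> \<forall>t\<in>T. 0 \<le> t \<Longrightarrow> W q T B l = g q (card T) (card B) l"
proof (induction "card T" arbitrary: T B l)
  case 0
  then have T: "T = {}" by simp
  show ?case unfolding T W_def Ml_empty using q by (cases l) (auto simp: crg_empty g0 g_P0)
next
  case (Suc n)
  define x where "x = Min T"
  have ne: "T \<noteq> {}" using Suc by auto
  have xT: "x \<in> T" and mn: "\<forall>t\<in>T - {x}. x < t" using min_facts[OF Suc.prems(1) ne] x_def by auto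
  have x0: "0 \<le> x" using Suc.prems xT by auto
  have cT': "card (T - {x}) = n" using Suc.hyps xT Suc.prems by simp
  have IH: "W q (T - {x}) B' l' = g q n (card B') l'" if "finite B'" for B' l'
    using Suc.hyps(1)[of "T - {x}" B' l'] cT' Suc.prems that by auto
  show ?case
  proof (cases l)
    case 0
    then show ?thesis using W_rec[OF Suc.prems(1,2) xT mn, of q 0] IH[OF Suc.prems(2)] q
      by (simp add: g0)
  next
    case (Suc l')
    have Bx: "{b\<in>B. \<not> (x < 0 \<and> b < 0)} = B" using x0 by auto
    have "(\<Sum>b\<in>B. q ^ rk B b * W q (T - {x}) (B - {b}) l') = (\<Sum>b\<in>B. q ^ rk B b * g q n (card B - 1) l')"
      using IH Suc.prems(2) by (intro sum.cong) (auto simp: card_Diff_singleton)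
    also have "\<dots> = qint q (card B) * g q n (card B - 1) l'"
      using rk_sum[OF Suc.prems(2), of q] q by (simp add: sum_distrib_right[symmetric])
    finally have S: "(\<Sum>b\<in>B. q ^ rk B b * W q (T - {x}) (B - {b}) l') = qint q (card B) * g q n (card B - 1) l'" .
    show ?thesis using W_rec[OF Suc.prems(1,2) xT mn, of q l] IH[OF Suc.prems(2)] S Suc Bx
      \<open>Suc n = card T\<close>[symmetric] g_rec[OF q, of n "card B" l'] by simp
  qed
qed

lemma W_gen:
  assumes q: "0 < q" "q < 1"
  shows "finite T \<Longrightarrow> finite B \<Longrightarrow> W q T B l = Fc q (card {t\<in>T. t < 0}) (card {t\<in>T. 0 \<le> t})
           (card {b\<in>B. b < 0}) (card {b\<in>B. 0 \<le> b}) l"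
proof (induction "card {t\<in>T. t < 0}" arbitrary: T B l)
  case 0
  then have "{t\<in>T. t < 0} = {}" by simp
  then have nn: "\<forall>t\<in>T. 0 \<le> t" by force
  then have cT: "card T = card {t\<in>T. 0 \<le> t}" by (metis (no_types, lifting) Collect_mem_eq Collect_cong)
  have "card B = card ({b\<in>B. b < 0} \<union> {b\<in>B. 0 \<le> b})" by (rule arg_cong[where f = card]) auto
  also have "\<dots> = card {b\<in>B. b < 0} + card {b\<in>B. 0 \<le> b}"
    by (rule card_Un_disjoint) (use 0 in auto)
  finally have cB: "card B = card {b\<in>B. b < 0} + card {b\<in>B. 0 \<le> b}" .
  show ?case using W_nonneg[OF q 0(2,3) nn, of l] Fc_A0[OF q] cT cB \<open>0 = card {t \<in> T. t < 0}\<close>[symmetric]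
    by simp
next
  case (Suc A)
  define x where "x = Min T"
  have ne: "T \<noteq> {}" using Suc.hyps(2) by auto
  have xT: "x \<in> T" and mn: "\<forall>t\<in>T - {x}. x < t" using min_facts[OF Suc.prems(1) ne] x_def by auto
  obtain t where t: "t \<in> T" "t < 0" using Suc.hyps(2) by (metis (mono_tags, lifting) Collect_empty_eq card.empty nat.distinct(1))
  have x0: "x < 0" using t Suc.prems(1) unfolding x_def by (meson Min_le le_less_trans)
  have n1: "{t\<in>T - {x}. t < 0} = {t\<in>T. t < 0} - {x}" by auto
  have cn: "card {t\<in>T - {x}. t < 0} = A" unfolding n1 using Suc.hyps(2) xT x0 Suc.prems(1) by simp
  have cp: "{t\<in>T - {x}. 0 \<le> t} = {t\<in>T. 0 \<le> t}" using x0 by auto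
  have IH: "W q (T - {x}) B' l' = Fc q A (card {t\<in>T. 0 \<le> t}) (card {b\<in>B'. b < 0}) (card {b\<in>B'. 0 \<le> b}) l'"
    if "finite B'" for B' l'
    using Suc.hyps(1)[of "T - {x}" B' l'] cn cp Suc.prems that by auto
  define P where "P = card {t\<in>T. 0 \<le> t}"
  define J where "J = card {b\<in>B. b < 0}"
  define K where "K = card {b\<in>B. 0 \<le> b}"
  show ?case
  proof (cases l)
    case 0
    then show ?thesis using W_rec[OF Suc.prems(1,2) xT mn, of q 0] IH[OF Suc.prems(2)] q
      by (simp add: Fc_l0)
  next
    case (Suc l')
    have Bx: "{b\<in>B. \<not> (x < 0 \<and> b < 0)} = {b\<in>B. 0 \<le> b}" using x0 by auto
    have cb: "card {d\<in>B - {b}. d < 0} = J" "card {d\<in>B - {b}. 0 \<le> d} = K - 1" if "b \<in> {b\<in>B. 0 \<le> b}" for b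
    proof -
      have "{d\<in>B - {b}. d < 0} = {b\<in>B. b < 0}" using that by auto
      then show "card {d\<in>B - {b}. d < 0} = J" unfolding J_def by simp
      have "{d\<in>B - {b}. 0 \<le> d} = {b\<in>B. 0 \<le> b} - {b}" by auto
      then show "card {d\<in>B - {b}. 0 \<le> d} = K - 1" unfolding K_def using that Suc.prems(2) by simp
    qed
    have "(\<Sum>b\<in>{b\<in>B. 0 \<le> b}. q ^ rk B b * W q (T - {x}) (B - {b}) l')
        = (\<Sum>b\<in>{b\<in>B. 0 \<le> b}. q ^ rk B b * Fc q A P J (K - 1) l')"
    proof (rule sum.cong[OF refl])
      fix b assume b: "b \<in> {b\<in>B. 0 \<le> b}"
      show "q ^ rk B b * W q (T - {x}) (B - {b}) l' = q ^ rk B b * Fc q A P J (K - 1) l'"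
        using IH[of "B - {b}" l'] Suc.prems(2) cb[OF b] unfolding P_def by simp
    qed
    also have "\<dots> = q ^ J * qint q K * Fc q A P J (K - 1) l'"
      using rk_sum_pos[OF Suc.prems(2), of q] q unfolding J_def K_def
      by (simp add: sum_distrib_right[symmetric])
    finally have S: "(\<Sum>b\<in>{b\<in>B. 0 \<le> b}. q ^ rk B b * W q (T - {x}) (B - {b}) l')
        = q ^ J * qint q K * Fc q A P J (K - 1) l'" .
    show ?thesis using W_rec[OF Suc.prems(1,2) xT mn, of q l] IH[OF Suc.prems(2)] S Suc Bx
      \<open>Suc A = card {t\<in>T. t < 0}\<close>[symmetric] Fc_rec[OF q, of A P J K l']
      unfolding P_def J_def K_def by simp
  qed
qed



lemma final_alg:
  assumes q: "0 < q" "q < 1"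
  shows "Fc q (\<alpha> + j) p j p p = qfact q p * (\<Sum>i = 0..p.
            q powi ((int p - int i) * (int \<alpha> - int i) + int p * int j)
            * qbinom q p i * qbinom q (\<alpha> + j) i * qbinom q (p - i + j) j)"
proof -
  have "tm q (\<alpha> + j) p j p p i = qfact q p * (q powi ((int p - int i) * (int \<alpha> - int i) + int p * int j)
            * qbinom q p i * qbinom q (\<alpha> + j) i * qbinom q (p - i + j) j)" if i: "i \<in> {0..p}" for i
  proof (cases "i \<le> \<alpha> + j")
    case True
    have ip: "i \<le> p" using i by simp
    have e: "(int p - int i) * (int \<alpha> - int i) + int p * int j = int ((\<alpha> + j - i) * (p - i) + j * i)"
    proof -
      have "int ((\<alpha> + j - i) * (p - i) + j * i) = (int \<alpha> + int j - int i) * (int p - int i) + int j * int i"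
        by (simp only: of_nat_add of_nat_mult of_nat_diff[OF True] of_nat_diff[OF ip])
      then show ?thesis by (simp add: algebra_simps)
    qed
    have pw: "q powi ((int p - int i) * (int \<alpha> - int i) + int p * int j) = q ^ ((\<alpha> + j - i) * (p - i)) * q ^ (j * i)"
      unfolding e power_int_of_nat power_add ..
    have f: "ff q p i * qfact q (p - i) = qfact q p" using ff_fact[OF ip] .
    have b1: "qbinom q p (p - i) = qbinom q p i" using qbinom_sym[OF ip] .
    have b2: "qbinom q (j + p - i) (p - i) = qbinom q (p - i + j) j"
    proof -
      have "j + p - i = p - i + j" "p - i = (p - i + j) - j" using ip by auto
      then show ?thesis using qbinom_sym[of j "p - i + j" q] by simp
    qed
    show ?thesis unfolding tm_def g_def pw b1 b2 f[symmetric] by (simp add: algebra_simps)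
  next
    case False
    then show ?thesis unfolding tm_def by simp
  qed
  then show ?thesis unfolding Fc_def sum_distrib_left by (rule sum.cong[OF refl])
qed



theorem lemma2p6:
  fixes q :: real and \<alpha> p j :: nat
  assumes "0 < q" and "q < 1"
  shows "(\<Sum>M\<in>matchings_l \<alpha> p j p. q ^ cr \<alpha> p j M)
       = qfact q p * (\<Sum>i = 0..p.
            q powi ((int p - int i) * (int \<alpha> - int i) + int p * int j)
            * qbinom q p i * qbinom q (\<alpha> + j) i * qbinom q (p - i + j) j)"
proof -
  have q: "0 < q" "q < 1" using assms by auto
  have M: "matchings_l \<alpha> p j p = Ml (top_vs \<alpha> p j) (bot_vs p j) p"
    unfolding matchings_l_def Ml_def matchings_def Mset_def ..
  have crr: "cr \<alpha> p j E = crg (top_vs \<alpha> p j) (bot_vs p j) E" for E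
    unfolding cr_def crg_def ..
  have fT: "finite (top_vs \<alpha> p j)" and fB: "finite (bot_vs p j)" unfolding top_vs_def bot_vs_def by auto
  have c1: "card {t\<in>top_vs \<alpha> p j. t < 0} = \<alpha> + j"
  proof -
    have "{t\<in>top_vs \<alpha> p j. t < 0} = {-(int \<alpha> + int j)..-1}" unfolding top_vs_def by auto
    then show ?thesis by simp
  qed
  have c2: "card {t\<in>top_vs \<alpha> p j. 0 \<le> t} = p"
  proof -
    have "{t\<in>top_vs \<alpha> p j. 0 \<le> t} = {1..int p}" unfolding top_vs_def by auto
    then show ?thesis by simp
  qed
  have c3: "card {t\<in>bot_vs p j. t < 0} = j"
  proof -
    have "{t\<in>bot_vs p j. t < 0} = {-(int j)..-1}" unfolding bot_vs_def by auto
    then show ?thesis by simp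
  qed
  have c4: "card {t\<in>bot_vs p j. 0 \<le> t} = p"
  proof -
    have "{t\<in>bot_vs p j. 0 \<le> t} = {1..int p}" unfolding bot_vs_def by auto
    then show ?thesis by simp
  qed
  have "(\<Sum>M\<in>matchings_l \<alpha> p j p. q ^ cr \<alpha> p j M) = W q (top_vs \<alpha> p j) (bot_vs p j) p"
    unfolding M crr W_def ..
  also have "\<dots> = Fc q (\<alpha> + j) p j p p" using W_gen[OF q fT fB, of p] c1 c2 c3 c4 by simp
  finally show ?thesis using final_alg[OF q, of \<alpha> j p] by simp
qed

end
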